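(* Let $\alpha\in\mathbb C$ and define sequences $u(k),v(k),f(k),g(k)$, $k\ge0$, by $u(0)=v(0)=0$, $f(0)=g(0)=1$ (so $u(1)=v(1)=1$) and, for $k\ge1$, $$u(k)=u(k-1)+f(k-1),\quad v(k)=v(k-1)+g(k-1),\quad f(k)=\frac{u(k)}{v(k)}\,g(k-1),\quad g(k)=\frac{\alpha v(k)}{k-\frac{\alpha u(k)}{f(k-1)}-\frac{\alpha v(k)}{g(k-1)}}.$$ (These are the recurrences equivalent to the constraints $\alpha u(k)=k\frac{f(k)g(k)f(k-1)}{f(k)g(k)+g(k)f(k-1)+f(k-1)g(k-1)}$, $\alpha v(k)=k\frac{g(k)f(k-1)g(k-1)}{f(k)g(k)+g(k)f(k-1)+f(k-1)g(k-1)}$ with $f(k)=u(k+1)-u(k)$, $g(k)=v(k+1)-v(k)$.) Then, for all $k$ such that the arguments are nonnegative integers, $$u(3k)=\frac{2k}{k+2\alpha}\Pi_1(k),\quad u(3k+1)=\frac{2k+2\alpha}{k+2\alpha}\Pi_1(k),\quad u(3k+2)=2\Pi_1(k),\quad f(3k-1)=f(3k)=f(3k+1)=\frac{2\alpha}{k+2\alpha}\Pi_1(k),$$ $$v(3k-1)=\frac{k-\alpha}{k+\alpha}\Pi_2(k),\quad v(3k)=\frac{k}{k+\alpha}\Pi_2(k),\quad v(3k+1)=\Pi_2(k),\quad g(3k-2)=g(3k-1)=g(3k)=\frac{\alpha}{k+\alpha}\Pi_2(k),$$ where $$\Pi_1(k)=\prod_{j=1}^k\frac{j+2\alpha}{j-\alpha},\qquad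 \Pi_2(k)=\prod_{j=1}^k\frac{j+\alpha}{j-2\alpha}.$$
   Context: Empty products equal $1$. The parameter $\alpha$ is such that all denominators occurring are nonzero. *)

theory Defs
  imports Complex_Main
begin

text \<open>The sequences (u k, v k, f k, g k) defined by the recurrences of the paper.
  Division uses the HOL convention x / 0 = 0; the theorem assumes all
  denominators are nonzero.\<close>

fun uvfg :: "complex \<Rightarrow> nat \<Rightarrow> complex \<times> complex \<times> complex \<times> complex" where
  "uvfg \<alpha> 0 = (0, 0, 1, 1)"
| "uvfg \<alpha> (Suc k) =
     (case uvfg \<alpha> k of (u0, v0, f0, g0) \<Rightarrow>
       (let u1 = u0 + f0; v1 = v0 + g0 in
        (u1, v1, u1 / v1 * g0,
         \<alpha> * v1 / (of_nat (Suc k) - \<alpha> * u1 / f0 - \<alpha> * v1 / g0))))"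

definition useq :: "complex \<Rightarrow> nat \<Rightarrow> complex" where
  "useq \<alpha> k = fst (uvfg \<alpha> k)"
definition vseq :: "complex \<Rightarrow> nat \<Rightarrow> complex" where
  "vseq \<alpha> k = fst (snd (uvfg \<alpha> k))"
definition fseq :: "complex \<Rightarrow> nat \<Rightarrow> complex" where
  "fseq \<alpha> k = fst (snd (snd (uvfg \<alpha> k)))"
definition gseq :: "complex \<Rightarrow> nat \<Rightarrow> complex" where
  "gseq \<alpha> k = snd (snd (snd (uvfg \<alpha> k)))"

definition Pi1 :: "complex \<Rightarrow> nat \<Rightarrow> complex" where
  "Pi1 \<alpha> k = (\<Prod>j=1..k. (of_nat j + 2 * \<alpha>) / (of_nat j - \<alpha>))"
definition Pi2 :: "complex \<Rightarrow> nat \<Rightarrow> complex" where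
  "Pi2 \<alpha> k = (\<Prod>j=1..k. (of_nat j + \<alpha>) / (of_nat j - 2 * \<alpha>))"

end

theory Submission imports Defs begin

lemma stepI: "uvfg a m = (u,v,f,g) \<Longrightarrow> u1 = u+f \<Longrightarrow> v1 = v+g \<Longrightarrow> f1 = u1/v1*g \<Longrightarrow>
   of_nat (Suc m) - a*u1/f - a*v1/g = D \<Longrightarrow> g1 = a*v1/D \<Longrightarrow> uvfg a (Suc m) = (u1,v1,f1,g1)"
  by (simp add: Let_def)

lemma gen1: "(a::complex) \<noteq> 0 \<Longrightarrow> q \<noteq> 0 \<Longrightarrow> D \<noteq> 0 \<Longrightarrow> a*(x/D*q)/(a*q/D) = x"
  by (simp add: field_simps)
lemma gen2: "(a::complex) \<noteq> 0 \<Longrightarrow> q \<noteq> 0 \<Longrightarrow> D \<noteq> 0 \<Longrightarrow> a*(x*q/D)/(a*q/D) = x"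
  by (simp add: field_simps)

definition S1 :: "complex \<Rightarrow> complex \<Rightarrow> complex \<Rightarrow> complex \<Rightarrow> _" where "S1 a c p q = ((2*c+2*a)/(c+2*a)*p, q, 2*a/(c+2*a)*p, a*q/(c+1-2*a))"
definition S2 :: "complex \<Rightarrow> complex \<Rightarrow> complex \<Rightarrow> complex \<Rightarrow> _" where "S2 a c p q = (2*p, (c+1-a)/(c+1-2*a)*q, 2*a*p/(c+1-a), a*q/(c+1-2*a))"
definition S3 :: "complex \<Rightarrow> complex \<Rightarrow> complex \<Rightarrow> complex \<Rightarrow> _" where "S3 a c p q = (2*(c+1)*p/(c+1-a), (c+1)*q/(c+1-2*a), 2*a*p/(c+1-a), a*q/(c+1-2*a))"

lemma A:
  fixes a c p q :: complex
  assumes h: "uvfg a (3*k+1) = S1 a c p q" and c: "c = of_nat k"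
    and nz: "a \<noteq> 0" "p \<noteq> 0" "q \<noteq> 0" "c + 2*a \<noteq> 0" "c + 1 - a \<noteq> 0" "c + 1 - 2*a \<noteq> 0"
  shows "uvfg a (3*k+2) = S2 a c p q"
proof -
  have c1: "c + 1 \<noteq> 0" using of_nat_neq_0[of k, where ?'a=complex] by (simp add: c add.commute)
  have d: "of_nat (Suc (3*k+1)) - a*(2*p)/(2*a/(c+2*a)*p)
     - a*((c+1-a)/(c+1-2*a)*q)/(a*q/(c+1-2*a)) = c + 1 - a"
  proof -
    have t1: "a*(2*p)/(2*a/(c+2*a)*p) = c+2*a" using nz by (simp add: field_simps)
    have t2: "a*((c+1-a)/(c+1-2*a)*q)/(a*q/(c+1-2*a)) = c+1-a" using gen1[OF nz(1) nz(3) nz(6)] .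
    show ?thesis unfolding t1 t2 by (simp add: c)
  qed
  have "uvfg a (Suc (3*k+1)) = S2 a c p q" unfolding S2_def
    apply (rule stepI[OF h[unfolded S1_def] _ _ _ d])
    subgoal using nz c1 by (simp add: divide_simps; simp add: algebra_simps)
    subgoal using nz c1 by (simp add: divide_simps; simp add: algebra_simps)
    subgoal using nz c1 by (simp add: divide_simps; simp add: algebra_simps)
    subgoal using nz c1 by (simp add: divide_simps; simp add: algebra_simps)
    done
  then show ?thesis by simp
qed

lemma B:
  fixes a c p q :: complex
  assumes h: "uvfg a (3*k+2) = S2 a c p q" and c: "c = of_nat k"
    and nz: "a \<noteq> 0" "p \<noteq> 0" "q \<noteq> 0" "c + 2*a \<noteq> 0" "c + 1 - a \<noteq> 0" "c + 1 - 2*a \<noteq> 0"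
  shows "uvfg a (3*k+3) = S3 a c p q"
proof -
  have c1: "c + 1 \<noteq> 0" using of_nat_neq_0[of k, where ?'a=complex] by (simp add: c add.commute)
  have d: "of_nat (Suc (3*k+2)) - a*(2*(c+1)*p/(c+1-a))/(2*a*p/(c+1-a))
     - a*((c+1)*q/(c+1-2*a))/(a*q/(c+1-2*a)) = c + 1"
  proof -
    have t1: "a*(2*(c+1)*p/(c+1-a))/(2*a*p/(c+1-a)) = c+1" using gen2[of a "2*p" "c+1-a" "c+1"] nz by (simp add: mult_ac)
    have t2: "a*((c+1)*q/(c+1-2*a))/(a*q/(c+1-2*a)) = c+1" using gen2[of a q "c+1-2*a" "c+1"] nz by (simp add: mult_ac)
    show ?thesis unfolding t1 t2 by (simp add: c)
  qed
  have "uvfg a (Suc (3*k+2)) = S3 a c p q" unfolding S3_def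
    apply (rule stepI[OF h[unfolded S2_def] _ _ _ d])
    subgoal using nz c1 by (simp add: divide_simps; simp add: algebra_simps)
    subgoal using nz c1 by (simp add: divide_simps; simp add: algebra_simps)
    subgoal using nz c1 by (simp add: divide_simps; simp add: algebra_simps)
    subgoal using nz c1 by (simp add: divide_simps; simp add: algebra_simps)
    done
  then show ?thesis by (simp add: numeral_3_eq_3)
qed

lemma C:
  fixes a c p q :: complex
  assumes h: "uvfg a (3*k+3) = S3 a c p q" and c: "c = of_nat k"
    and nz: "a \<noteq> 0" "p \<noteq> 0" "q \<noteq> 0" "c + 1 + 2*a \<noteq> 0" "c + 1 - a \<noteq> 0" "c + 1 - 2*a \<noteq> 0"
       "c + 2 - 2*a \<noteq> 0" "c + 1 + a \<noteq> 0"
  shows "uvfg a (3*(k+1)+1) = S1 a (c+1) (p*(c+1+2*a)/(c+1-a)) (q*(c+1+a)/(c+1-2*a))"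
proof -
  have c1: "c + 1 \<noteq> 0" using of_nat_neq_0[of k, where ?'a=complex] by (simp add: c add.commute)
  have d: "of_nat (Suc (3*k+3)) - a*((2*(c+1)+2*a)/(c+1+2*a)*(p*(c+1+2*a)/(c+1-a)))/(2*a*p/(c+1-a))
     - a*(q*(c+1+a)/(c+1-2*a))/(a*q/(c+1-2*a)) = c + 1 + 1 - 2*a"
  proof -
    have t1: "a*((2*(c+1)+2*a)/(c+1+2*a)*(p*(c+1+2*a)/(c+1-a)))/(2*a*p/(c+1-a)) = c+1+a" using nz by (simp add: divide_simps; simp add: algebra_simps)
    have t2: "a*(q*(c+1+a)/(c+1-2*a))/(a*q/(c+1-2*a)) = c+1+a" using nz by (simp add: divide_simps; simp add: algebra_simps)
    show ?thesis unfolding t1 t2 by (simp add: c)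
  qed
  have "uvfg a (Suc (3*k+3)) = S1 a (c+1) (p*(c+1+2*a)/(c+1-a)) (q*(c+1+a)/(c+1-2*a))" unfolding S1_def
    apply (rule stepI[OF h[unfolded S3_def] _ _ _ d])
    subgoal using nz c1 by (simp add: divide_simps; simp add: algebra_simps)
    subgoal using nz c1 by (simp add: divide_simps; simp add: algebra_simps)
    subgoal using nz c1 by (simp add: divide_simps; simp add: algebra_simps)
    subgoal using nz c1 by (simp add: divide_simps; simp add: algebra_simps)
    done
  then show ?thesis by simp
qed

lemma Pi1_Suc: "Pi1 a (Suc k) = Pi1 a k * ((of_nat k + 1 + 2*a) / (of_nat k + 1 - a))"
  unfolding Pi1_def by (simp add: prod.cl_ivl_Suc algebra_simps)
lemma Pi2_Suc: "Pi2 a (Suc k) = Pi2 a k * ((of_nat k + 1 + a) / (of_nat k + 1 - 2*a))"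
  unfolding Pi2_def by (simp add: prod.cl_ivl_Suc algebra_simps)

lemma M:
  fixes a :: complex
  assumes prod_denoms: "\<And>j::nat. j \<ge> 1 \<Longrightarrow> of_nat j - a \<noteq> 0 \<and> of_nat j - 2 * a \<noteq> 0"
    and formula_denoms: "\<And>k::nat. of_nat k + a \<noteq> 0 \<and> of_nat k + 2 * a \<noteq> 0"
  shows "uvfg a (3*k+1) = S1 a (of_nat k) (Pi1 a k) (Pi2 a k) \<and>
         uvfg a (3*k+2) = S2 a (of_nat k) (Pi1 a k) (Pi2 a k) \<and>
         uvfg a (3*k+3) = S3 a (of_nat k) (Pi1 a k) (Pi2 a k)"
proof -
  have a0: "a \<noteq> 0" using formula_denoms[of 0] by simp
  have pnz: "Pi1 a k \<noteq> 0" "Pi2 a k \<noteq> 0" for k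
    unfolding Pi1_def Pi2_def using prod_denoms formula_denoms by auto
  have n1: "of_nat k + 1 - a \<noteq> 0" "of_nat k + 1 - 2*a \<noteq> 0" for k
    using prod_denoms[of "Suc k"] by (simp_all add: algebra_simps)
  have n2: "of_nat k + 2 - 2*a \<noteq> 0" for k
    using prod_denoms[of "Suc (Suc k)"] by (simp_all add: algebra_simps)
  have n3: "of_nat k + 1 + a \<noteq> 0" "of_nat k + 1 + 2*a \<noteq> 0" for k
    using formula_denoms[of "Suc k"] by (simp_all add: algebra_simps)
  have n4: "of_nat k + 2*a \<noteq> 0" for k using formula_denoms[of k] by simp
  have S1k: "uvfg a (3*k+1) = S1 a (of_nat k) (Pi1 a k) (Pi2 a k)"
  proof (induction k)
    case 0
    have "uvfg a (Suc 0) = S1 a (of_nat 0) (Pi1 a 0) (Pi2 a 0)"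
      unfolding S1_def Pi1_def Pi2_def using a0 n1[of 0] by (simp add: Let_def)
    then show ?case by simp
  next
    case (Suc k)
    have s2: "uvfg a (3*k+2) = S2 a (of_nat k) (Pi1 a k) (Pi2 a k)"
      by (rule A[OF Suc refl a0 pnz n4 n1])
    have s3: "uvfg a (3*k+3) = S3 a (of_nat k) (Pi1 a k) (Pi2 a k)"
      by (rule B[OF s2 refl a0 pnz n4 n1])
    have "uvfg a (3*(k+1)+1) = S1 a (of_nat k + 1) (Pi1 a k * (of_nat k+1+2*a)/(of_nat k+1-a)) (Pi2 a k*(of_nat k+1+a)/(of_nat k+1-2*a))"
      by (rule C[OF s3 refl a0 pnz n3(2) n1 n2 n3(1)])
    then show ?case by (simp add: Pi1_Suc Pi2_Suc add.commute)
  qed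
  have s2: "uvfg a (3*k+2) = S2 a (of_nat k) (Pi1 a k) (Pi2 a k)"
    by (rule A[OF S1k refl a0 pnz n4 n1])
  have s3: "uvfg a (3*k+3) = S3 a (of_nat k) (Pi1 a k) (Pi2 a k)"
    by (rule B[OF s2 refl a0 pnz n4 n1])
  show ?thesis using S1k s2 s3 by simp
qed
theorem theorem23:
  fixes \<alpha> :: complex
  assumes rec_denoms: "\<And>k. k \<ge> 1 \<Longrightarrow>
      vseq \<alpha> k \<noteq> 0 \<and> fseq \<alpha> (k - 1) \<noteq> 0 \<and> gseq \<alpha> (k - 1) \<noteq> 0 \<and>
      of_nat k - \<alpha> * useq \<alpha> k / fseq \<alpha> (k - 1) - \<alpha> * vseq \<alpha> k / gseq \<alpha> (k - 1) \<noteq> 0"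
    and prod_denoms: "\<And>j::nat. j \<ge> 1 \<Longrightarrow> of_nat j - \<alpha> \<noteq> 0 \<and> of_nat j - 2 * \<alpha> \<noteq> 0"
    and formula_denoms: "\<And>k::nat. of_nat k + \<alpha> \<noteq> 0 \<and> of_nat k + 2 * \<alpha> \<noteq> 0"
  shows "\<forall>k::nat.
      useq \<alpha> (3*k) = 2 * of_nat k / (of_nat k + 2*\<alpha>) * Pi1 \<alpha> k \<and>
      useq \<alpha> (3*k+1) = (2 * of_nat k + 2*\<alpha>) / (of_nat k + 2*\<alpha>) * Pi1 \<alpha> k \<and>
      useq \<alpha> (3*k+2) = 2 * Pi1 \<alpha> k \<and>
      fseq \<alpha> (3*k) = 2*\<alpha> / (of_nat k + 2*\<alpha>) * Pi1 \<alpha> k \<and>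
      fseq \<alpha> (3*k+1) = 2*\<alpha> / (of_nat k + 2*\<alpha>) * Pi1 \<alpha> k \<and>
      vseq \<alpha> (3*k) = of_nat k / (of_nat k + \<alpha>) * Pi2 \<alpha> k \<and>
      vseq \<alpha> (3*k+1) = Pi2 \<alpha> k \<and>
      gseq \<alpha> (3*k) = \<alpha> / (of_nat k + \<alpha>) * Pi2 \<alpha> k \<and>
      (k \<ge> 1 \<longrightarrow>
        fseq \<alpha> (3*k-1) = 2*\<alpha> / (of_nat k + 2*\<alpha>) * Pi1 \<alpha> k \<and>
        vseq \<alpha> (3*k-1) = (of_nat k - \<alpha>) / (of_nat k + \<alpha>) * Pi2 \<alpha> k \<and>
        gseq \<alpha> (3*k-2) = \<alpha> / (of_nat k + \<alpha>) * Pi2 \<alpha> k \<and>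
        gseq \<alpha> (3*k-1) = \<alpha> / (of_nat k + \<alpha>) * Pi2 \<alpha> k)"
proof (intro allI)
  fix k :: nat
  have a0: "\<alpha> \<noteq> 0" using formula_denoms[of 0] by simp
  have pnz: "Pi1 \<alpha> k \<noteq> 0" "Pi2 \<alpha> k \<noteq> 0" for k
    unfolding Pi1_def Pi2_def using prod_denoms formula_denoms by auto
  have n1: "of_nat k + 1 - \<alpha> \<noteq> 0" "of_nat k + 1 - 2*\<alpha> \<noteq> 0" for k
    using prod_denoms[of "Suc k"] by (simp_all add: algebra_simps)
  have n3: "of_nat k + 1 + \<alpha> \<noteq> 0" "of_nat k + 1 + 2*\<alpha> \<noteq> 0" for k
    using formula_denoms[of "Suc k"] by (simp_all add: algebra_simps)
  note MM = M[OF prod_denoms formula_denoms]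
  have P: "useq \<alpha> (3*k+1) = (2 * of_nat k + 2*\<alpha>) / (of_nat k + 2*\<alpha>) * Pi1 \<alpha> k \<and>
      useq \<alpha> (3*k+2) = 2 * Pi1 \<alpha> k \<and>
      fseq \<alpha> (3*k+1) = 2*\<alpha> / (of_nat k + 2*\<alpha>) * Pi1 \<alpha> k \<and>
      vseq \<alpha> (3*k+1) = Pi2 \<alpha> k"
    using MM[of k] unfolding useq_def fseq_def vseq_def S1_def S2_def by (simp del: uvfg.simps)
  show "useq \<alpha> (3*k) = 2 * of_nat k / (of_nat k + 2*\<alpha>) * Pi1 \<alpha> k \<and>
      useq \<alpha> (3*k+1) = (2 * of_nat k + 2*\<alpha>) / (of_nat k + 2*\<alpha>) * Pi1 \<alpha> k \<and>
      useq \<alpha> (3*k+2) = 2 * Pi1 \<alpha> k \<and>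
      fseq \<alpha> (3*k) = 2*\<alpha> / (of_nat k + 2*\<alpha>) * Pi1 \<alpha> k \<and>
      fseq \<alpha> (3*k+1) = 2*\<alpha> / (of_nat k + 2*\<alpha>) * Pi1 \<alpha> k \<and>
      vseq \<alpha> (3*k) = of_nat k / (of_nat k + \<alpha>) * Pi2 \<alpha> k \<and>
      vseq \<alpha> (3*k+1) = Pi2 \<alpha> k \<and>
      gseq \<alpha> (3*k) = \<alpha> / (of_nat k + \<alpha>) * Pi2 \<alpha> k \<and>
      (k \<ge> 1 \<longrightarrow>
        fseq \<alpha> (3*k-1) = 2*\<alpha> / (of_nat k + 2*\<alpha>) * Pi1 \<alpha> k \<and>
        vseq \<alpha> (3*k-1) = (of_nat k - \<alpha>) / (of_nat k + \<alpha>) * Pi2 \<alpha> k \<and>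
        gseq \<alpha> (3*k-2) = \<alpha> / (of_nat k + \<alpha>) * Pi2 \<alpha> k \<and>
        gseq \<alpha> (3*k-1) = \<alpha> / (of_nat k + \<alpha>) * Pi2 \<alpha> k)"
  proof (cases k)
    case 0
    then show ?thesis using P a0 unfolding useq_def fseq_def vseq_def gseq_def Pi1_def Pi2_def
      by (simp del: uvfg.simps add: uvfg.simps(1))
  next
    case (Suc j)
    have e1: "3*k = 3*j+3" "3*k-1 = 3*j+2" "3*k-2 = 3*j+1" using Suc by simp_all
    have k: "(of_nat k::complex) = of_nat j + 1" using Suc by simp
    have Q: "useq \<alpha> (3*j+3) = 2*(of_nat j+1)*Pi1 \<alpha> j/(of_nat j+1-\<alpha>)"
      "vseq \<alpha> (3*j+3) = (of_nat j+1)*Pi2 \<alpha> j/(of_nat j+1-2*\<alpha>)"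
      "fseq \<alpha> (3*j+3) = 2*\<alpha>*Pi1 \<alpha> j/(of_nat j+1-\<alpha>)"
      "gseq \<alpha> (3*j+3) = \<alpha>*Pi2 \<alpha> j/(of_nat j+1-2*\<alpha>)"
      "vseq \<alpha> (3*j+2) = (of_nat j+1-\<alpha>)/(of_nat j+1-2*\<alpha>)*Pi2 \<alpha> j"
      "fseq \<alpha> (3*j+2) = 2*\<alpha>*Pi1 \<alpha> j/(of_nat j+1-\<alpha>)"
      "gseq \<alpha> (3*j+2) = \<alpha>*Pi2 \<alpha> j/(of_nat j+1-2*\<alpha>)"
      "gseq \<alpha> (3*j+1) = \<alpha>*Pi2 \<alpha> j/(of_nat j+1-2*\<alpha>)"
      using MM[of j] unfolding useq_def fseq_def vseq_def gseq_def S1_def S2_def S3_def by (simp_all del: uvfg.simps)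
    have p1: "Pi1 \<alpha> k = Pi1 \<alpha> j * ((of_nat j + 1 + 2*\<alpha>) / (of_nat j + 1 - \<alpha>))"
      using Suc Pi1_Suc by simp
    have p2: "Pi2 \<alpha> k = Pi2 \<alpha> j * ((of_nat j + 1 + \<alpha>) / (of_nat j + 1 - 2*\<alpha>))"
      using Suc Pi2_Suc by simp
    note nz = a0 pnz n1 n3
    have u0: "useq \<alpha> (3*k) = 2 * of_nat k / (of_nat k + 2*\<alpha>) * Pi1 \<alpha> k"
      unfolding e1(2) e1(3) unfolding e1(1) Q p1 k using nz by (simp add: divide_simps; simp add: algebra_simps)
    have f0: "fseq \<alpha> (3*k) = 2*\<alpha> / (of_nat k + 2*\<alpha>) * Pi1 \<alpha> k"
      unfolding e1(2) e1(3) unfolding e1(1) Q p1 k using nz by (simp add: divide_simps; simp add: algebra_simps)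
    have "fseq \<alpha> (3*k-1) = fseq \<alpha> (3*k)" unfolding e1(2) unfolding e1(1) by (simp only: Q)
    with f0 have f2: "fseq \<alpha> (3*k-1) = 2*\<alpha> / (of_nat k + 2*\<alpha>) * Pi1 \<alpha> k" by simp
    have v0: "vseq \<alpha> (3*k) = of_nat k / (of_nat k + \<alpha>) * Pi2 \<alpha> k"
      unfolding e1(2) e1(3) unfolding e1(1) Q p2 k using nz by (simp add: divide_simps; simp add: algebra_simps)
    have v2: "vseq \<alpha> (3*k-1) = (of_nat k - \<alpha>) / (of_nat k + \<alpha>) * Pi2 \<alpha> k"
      unfolding e1(2) e1(3) unfolding e1(1) Q p2 k using nz by (simp add: divide_simps; simp add: algebra_simps)
    have g0: "gseq \<alpha> (3*k) = \<alpha> / (of_nat k + \<alpha>) * Pi2 \<alpha> k"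
      unfolding e1(2) e1(3) unfolding e1(1) Q p2 k using nz by (simp add: divide_simps; simp add: algebra_simps)
    have g1: "gseq \<alpha> (3*k-2) = \<alpha> / (of_nat k + \<alpha>) * Pi2 \<alpha> k"
      unfolding e1(2) e1(3) unfolding e1(1) Q p2 k using nz by (simp add: divide_simps; simp add: algebra_simps)
    have g2: "gseq \<alpha> (3*k-1) = \<alpha> / (of_nat k + \<alpha>) * Pi2 \<alpha> k"
      unfolding e1(2) e1(3) unfolding e1(1) Q p2 k using nz by (simp add: divide_simps; simp add: algebra_simps)
    show ?thesis using P u0 f0 f2 v0 v2 g0 g1 g2 by blast
  qed
qed

end
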